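(* Let $n\ge 1$, $N=\{1,\dots,n\}$, $A=(a_{ij})\in[0,1]^{n\times n}$ and $\lambda\in[0,+\infty)$. If for every $k=(k_1,\dots,k_n)\in K$ the system $$q_{(k_j-1)j}\le x_j\le q_{k_jj}\ \text{ for all } j\in N,\qquad \sum_{j\in N}\big[\delta_{ij}\, x_j+(1-\delta_{ij})\, a_{ij}\big]=\lambda x_i\ \text{ for all } i\in N$$ has no solution $x\in[0,1]^n$ with $x\neq\theta$, then $V(A,\lambda)=\emptyset$.
   Context: $\theta=(0,\dots,0)\in[0,1]^n$. For $x\in[0,1]^n$ and $\lambda\in[0,+\infty)$, the equation $A\odot x^T=\lambda x^T$ means $\sum_{j\in N}\min\{a_{ij},x_j\}=\lambda x_i$ for every $i\in N$. $V(A,\lambda)=\{x\in[0,1]^n : A\odot x^T=\lambda x^T,\ x\neq\theta\}$. For each $j\in N$, let $t_j$ be the number of distinct values in $\{a_{ij}: i\in N\}\cap(0,1)$, list these values as $q_{1j}<\dots<q_{t_jj}$, and put $q_{0j}=0$, $q_{(t_j+1)j}=1$. Let $K_j=\{1,\dots,t_j+1\}$ (the indices $k$ with $q_{kj}>0$) and $K=K_1\times\dots\times K_n$. For $k\in K$ and $i,j\in N$, $\delta_{ij}=1$ if $q_{k_jj}\le a_{ij}$ and $\delta_{ij}=0$ if $a_{ij}\le q_{(k_j-1)j}$. *)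

theory Defs
  imports Main Complex_Main
begin

definition qvals :: "nat \<Rightarrow> (nat \<Rightarrow> nat \<Rightarrow> real) \<Rightarrow> nat \<Rightarrow> real list" where
  "qvals n A j = sorted_list_of_set ({A i j | i. i \<in> {1..n}} \<inter> {0<..<1})"

definition tcnt :: "nat \<Rightarrow> (nat \<Rightarrow> nat \<Rightarrow> real) \<Rightarrow> nat \<Rightarrow> nat" where
  "tcnt n A j = length (qvals n A j)"

text \<open>q n A k j = q_{kj}: q_{0j} = 0, q_{kj} = k-th smallest value for 1 <= k <= t_j,
  q_{(t_j+1)j} = 1.\<close>
definition q :: "nat \<Rightarrow> (nat \<Rightarrow> nat \<Rightarrow> real) \<Rightarrow> nat \<Rightarrow> nat \<Rightarrow> real" where
  "q n A k j = (if k = 0 then 0 else if k \<le> tcnt n A j then qvals n A j ! (k - 1) else 1)"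

definition Kset :: "nat \<Rightarrow> (nat \<Rightarrow> nat \<Rightarrow> real) \<Rightarrow> nat \<Rightarrow> nat set" where
  "Kset n A j = {1..tcnt n A j + 1}"

text \<open>delta_ij for a given k: 1 if q_{k_j j} <= a_ij, and 0 otherwise
  (otherwise means a_ij <= q_{(k_j-1)j}, since consecutive q's bracket no entry).\<close>
definition delta :: "nat \<Rightarrow> (nat \<Rightarrow> nat \<Rightarrow> real) \<Rightarrow> (nat \<Rightarrow> nat) \<Rightarrow> nat \<Rightarrow> nat \<Rightarrow> real" where
  "delta n A k i j = (if q n A (k j) j \<le> A i j then 1 else 0)"

definition in_unit_cube :: "nat \<Rightarrow> (nat \<Rightarrow> real) \<Rightarrow> bool" where
  "in_unit_cube n x \<longleftrightarrow> (\<forall>j\<in>{1..n}. 0 \<le> x j \<and> x j \<le> 1)"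

definition nonzero_vec :: "nat \<Rightarrow> (nat \<Rightarrow> real) \<Rightarrow> bool" where
  "nonzero_vec n x \<longleftrightarrow> (\<exists>j\<in>{1..n}. x j \<noteq> 0)"

text \<open>Eigenspace V(A,lambda) (max-min / "sum-min" product A \<odot> x^T = lambda x^T).
  Vectors are restricted to be 0 outside N so that they correspond to elements of [0,1]^n.\<close>
definition Veig :: "nat \<Rightarrow> (nat \<Rightarrow> nat \<Rightarrow> real) \<Rightarrow> real \<Rightarrow> (nat \<Rightarrow> real) set" where
  "Veig n A lam = {x. in_unit_cube n x \<and> (\<forall>j. j \<notin> {1..n} \<longrightarrow> x j = 0) \<and>
      (\<forall>i\<in>{1..n}. (\<Sum>j\<in>{1..n}. min (A i j) (x j)) = lam * x i) \<and> nonzero_vec n x}"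

end

theory Submission
  imports Defs
begin

lemma qvals_props:
  "set (qvals n A j) = {A i j | i. i \<in> {1..n}} \<inter> {0<..<1} \<and> sorted (qvals n A j)"
proof -
  have "finite {A i j | i. i \<in> {1..n}}" by simp
  hence "finite ({A i j | i. i \<in> {1..n}} \<inter> {0<..<1})" by blast
  thus ?thesis unfolding qvals_def by simp
qed

lemma q_bounds: "0 \<le> q n A k j \<and> q n A k j \<le> 1"
proof (cases "k = 0 \<or> k > tcnt n A j")
  case True thus ?thesis unfolding q_def by auto
next
  case False
  hence "qvals n A j ! (k-1) \<in> set (qvals n A j)" unfolding tcnt_def by auto
  with qvals_props[of n A j] have "qvals n A j ! (k-1) \<in> {0<..<1}" by blast
  with False show ?thesis unfolding q_def by auto
qed

lemma q_mono: assumes "a \<le> b" shows "q n A a j \<le> q n A b j"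
proof (cases "a = 0 \<or> b > tcnt n A j")
  case True thus ?thesis using q_bounds[of n A a j] q_bounds[of n A b j]
    unfolding q_def by (auto split: if_splits)
next
  case False
  hence "a - 1 \<le> b - 1" "b - 1 < length (qvals n A j)" "a \<noteq> 0" "b \<noteq> 0" "b \<le> tcnt n A j" "a \<le> tcnt n A j"
    using assms unfolding tcnt_def by auto
  hence "qvals n A j ! (a-1) \<le> qvals n A j ! (b-1)"
    using qvals_props[of n A j] by (auto intro: sorted_nth_mono)
  thus ?thesis using False assms \<open>a \<le> tcnt n A j\<close> \<open>b \<le> tcnt n A j\<close> unfolding q_def by auto
qed

lemma q_hit:
  assumes "i \<in> {1..n}" "0 < A i j" "A i j < 1"
  shows "\<exists>m. 1 \<le> m \<and> m \<le> tcnt n A j \<and> q n A m j = A i j"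
proof -
  have "A i j \<in> set (qvals n A j)" using qvals_props[of n A j] assms by auto
  then obtain p where "p < length (qvals n A j)" "qvals n A j ! p = A i j"
    by (auto simp: in_set_conv_nth)
  thus ?thesis unfolding q_def tcnt_def by (intro exI[of _ "Suc p"]) auto
qed

theorem theorem3p2:
  fixes n :: nat and A :: "nat \<Rightarrow> nat \<Rightarrow> real" and lam :: real
  assumes "n \<ge> 1"
    and "\<forall>i\<in>{1..n}. \<forall>j\<in>{1..n}. 0 \<le> A i j \<and> A i j \<le> 1"
    and "lam \<ge> 0"
    and "\<forall>k :: nat \<Rightarrow> nat. (\<forall>j\<in>{1..n}. k j \<in> Kset n A j) \<longrightarrow>
           \<not> (\<exists>x :: nat \<Rightarrow> real. in_unit_cube n x \<and> nonzero_vec n x \<and>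
                 (\<forall>j\<in>{1..n}. q n A (k j - 1) j \<le> x j \<and> x j \<le> q n A (k j) j) \<and>
                 (\<forall>i\<in>{1..n}. (\<Sum>j\<in>{1..n}. delta n A k i j * x j + (1 - delta n A k i j) * A i j)
                                = lam * x i))"
  shows "Veig n A lam = {}"
proof (rule ccontr)
  assume "Veig n A lam \<noteq> {}"
  then obtain x where x: "x \<in> Veig n A lam" by blast
  hence cube: "in_unit_cube n x" and nz: "nonzero_vec n x"
    and eq: "\<forall>i\<in>{1..n}. (\<Sum>j\<in>{1..n}. min (A i j) (x j)) = lam * x i"
    unfolding Veig_def by auto
  define k where "k j = (LEAST k. 1 \<le> k \<and> x j \<le> q n A k j)" for j
  have kprops: "1 \<le> k j \<and> x j \<le> q n A (k j) j \<and> k j \<le> tcnt n A j + 1 \<and> q n A (k j - 1) j \<le> x j"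
    if j: "j \<in> {1..n}" for j
  proof -
    have x01: "0 \<le> x j" "x j \<le> 1" using cube j unfolding in_unit_cube_def by auto
    have w: "1 \<le> tcnt n A j + 1 \<and> x j \<le> q n A (tcnt n A j + 1) j"
      using x01 unfolding q_def by auto
    have P: "1 \<le> k j \<and> x j \<le> q n A (k j) j"
      unfolding k_def by (rule LeastI[of _ "tcnt n A j + 1"]) (rule w)
    have le: "k j \<le> tcnt n A j + 1"
      unfolding k_def by (rule Least_le) (rule w)
    have "q n A (k j - 1) j \<le> x j"
    proof (cases "k j - 1 = 0")
      case True thus ?thesis using x01 unfolding q_def by simp
    next
      case False
      have "k j - 1 < k j" using False by simp
      hence "\<not> (1 \<le> k j - 1 \<and> x j \<le> q n A (k j - 1) j)"
        unfolding k_def using not_less_Least by blast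
      thus ?thesis using False by auto
    qed
    thus ?thesis using P le by auto
  qed
  have termeq: "delta n A k i j * x j + (1 - delta n A k i j) * A i j = min (A i j) (x j)"
    if i: "i \<in> {1..n}" and j: "j \<in> {1..n}" for i j
  proof (cases "q n A (k j) j \<le> A i j")
    case True
    hence "x j \<le> A i j" using kprops[OF j] by linarith
    thus ?thesis using True unfolding delta_def by simp
  next
    case False
    have a01: "0 \<le> A i j" "A i j \<le> 1" using assms(2) i j by auto
    have x0: "0 \<le> x j" using cube j unfolding in_unit_cube_def by auto
    have "A i j \<le> x j"
    proof (cases "A i j = 0")
      case True thus ?thesis using x0 by simp
    next
      case A0: False
      have "A i j \<noteq> 1" using False q_bounds[of n A "k j" j] by auto
      with A0 a01 obtain m where m: "1 \<le> m" "q n A m j = A i j"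
        using q_hit[OF i, of A j] by force
      have "m \<le> k j - 1"
      proof (rule ccontr)
        assume "\<not> m \<le> k j - 1"
        hence "k j \<le> m" by simp
        hence "q n A (k j) j \<le> q n A m j" by (rule q_mono)
        thus False using False m by simp
      qed
      hence "q n A m j \<le> q n A (k j - 1) j" by (rule q_mono)
      thus ?thesis using m kprops[OF j] by simp
    qed
    thus ?thesis using False unfolding delta_def by simp
  qed
  have "(\<forall>j\<in>{1..n}. k j \<in> Kset n A j)" using kprops unfolding Kset_def by auto
  moreover have "\<forall>i\<in>{1..n}. (\<Sum>j\<in>{1..n}. delta n A k i j * x j + (1 - delta n A k i j) * A i j)
                                = lam * x i"
  proof
    fix i assume i: "i \<in> {1..n}"
    have "(\<Sum>j\<in>{1..n}. delta n A k i j * x j + (1 - delta n A k i j) * A i j)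
        = (\<Sum>j\<in>{1..n}. min (A i j) (x j))" using termeq[OF i] by (intro sum.cong) auto
    thus "(\<Sum>j\<in>{1..n}. delta n A k i j * x j + (1 - delta n A k i j) * A i j) = lam * x i"
      using eq i by simp
  qed
  ultimately show False using assms(4) cube nz kprops by blast
qed

end
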